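(* $11\notin\operatorname{Spec}(32_{65})$.
   Context: $32_{65}$ is the finite integral symmetric relation algebra with atoms $1'$, $a$, $b$, $c$, all symmetric, in which a diversity cycle $xyz$ (with $x,y,z\in\{a,b,c\}$) is mandatory (i.e. $x;y\ge z$) if it involves $a$ and forbidden (i.e. $x;y\cdot z=0$) otherwise. A representation over a set $U$ is an embedding into the full relation algebra on $U\times U$. $\operatorname{Spec}(A)$ is the set of cardinals $\alpha\le\omega$ such that $A$ has a representation over a set of cardinality $\alpha$. *)

theory Defs
  imports Main
begin

text \<open>The finite relation algebra 32_65, given concretely as the complex algebra of its
atom structure: elements are sets of atoms, with atoms E (the identity 1'), a, b, c.\<close>

datatype atom = E | Aa | Ab | Ac

definition diversity :: "atom \<Rightarrow> bool" where
  "diversity x \<longleftrightarrow> x \<noteq> E"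

text \<open>Allowed (consistent) triples: z \<le> x;y. Identity triples as usual; a diversity
cycle xyz is mandatory iff it involves a, and forbidden otherwise.\<close>
definition atom_comp :: "atom \<Rightarrow> atom \<Rightarrow> atom set" where
  "atom_comp x y =
     (if x = E then {y}
      else if y = E then {x}
      else (if x = y then {E} else {}) \<union>
           {z. z \<noteq> E \<and> (x = Aa \<or> y = Aa \<or> z = Aa)})"

text \<open>Operations of the algebra 32_65 (all atoms symmetric, so converse is the identity).\<close>
definition ra_comp :: "atom set \<Rightarrow> atom set \<Rightarrow> atom set" where
  "ra_comp X Y = (\<Union>x\<in>X. \<Union>y\<in>Y. atom_comp x y)"

definition ra_conv :: "atom set \<Rightarrow> atom set" where
  "ra_conv X = X"

definition ra_one :: "atom set" where
  "ra_one = {E}"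

definition representation :: "'u set \<Rightarrow> (atom set \<Rightarrow> ('u \<times> 'u) set) \<Rightarrow> bool" where
  "representation U h \<longleftrightarrow>
     (\<forall>X. h X \<subseteq> U \<times> U) \<and>
     inj h \<and>
     (\<forall>X Y. h (X \<union> Y) = h X \<union> h Y) \<and>
     (\<forall>X. h (- X) = (U \<times> U) - h X) \<and>
     h ra_one = Id_on U \<and>
     (\<forall>X. h (ra_conv X) = (h X)\<inverse>) \<and>
     (\<forall>X Y. h (ra_comp X Y) = h X O h Y)"

definition has_representation_over :: "'u set \<Rightarrow> bool" where
  "has_representation_over U \<longleftrightarrow> (\<exists>h. representation U h)"

end

theory Submission
  imports Defs
begin

lemma comb_core:
  fixes U :: "'u set" and A G :: "('u \<times> 'u) set"
  assumes fin: "finite U" and cardU: "card U = 11"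
    and GU: "G \<subseteq> U \<times> U" and symG: "\<And>x y. (x,y) \<in> G \<Longrightarrow> (y,x) \<in> G"
    and disj: "\<And>x y. (x,y) \<in> A \<Longrightarrow> (x,y) \<notin> G"
    and tot: "\<And>x y. x \<in> U \<Longrightarrow> y \<in> U \<Longrightarrow> x \<noteq> y \<Longrightarrow> (x,y) \<in> A \<or> (x,y) \<in> G"
    and tri: "\<And>x y z. (x,y) \<in> G \<Longrightarrow> (y,z) \<in> G \<Longrightarrow> (x,z) \<notin> G"
    and GAA: "G \<subseteq> A O A"
    and cod: "\<And>x y. (x,y) \<in> A \<Longrightarrow> 4 \<le> card ({z. (x,z) \<in> G} \<inter> {z. (y,z) \<in> G})"
    and nb: "\<And>x. x \<in> U \<Longrightarrow> \<exists>q. (x,q) \<in> G"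
  shows False
proof -
  define N where "N x = {z. (x,z) \<in> G}" for x
  have NU: "N x \<subseteq> U" for x using GU unfolding N_def by auto
  have fN: "finite (N x)" for x using NU fin finite_subset by blast
  have claim1: "8 \<le> card (N x)" if "(x,y) \<in> A" "(x,y') \<in> A" "(y,y') \<in> G" for x y y'
  proof -
    have d: "(N x \<inter> N y) \<inter> (N x \<inter> N y') = {}"
      using tri symG that(3) unfolding N_def by blast
    have f: "finite (N x)" using NU fin finite_subset by blast
    have c1: "4 \<le> card (N x \<inter> N y)" using cod[OF that(1)] unfolding N_def by simp
    have c2: "4 \<le> card (N x \<inter> N y')" using cod[OF that(2)] unfolding N_def by simp
    have "card ((N x \<inter> N y) \<union> (N x \<inter> N y')) = card (N x \<inter> N y) + card (N x \<inter> N y')"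
      using d f by (intro card_Un_disjoint) auto
    moreover have "card ((N x \<inter> N y) \<union> (N x \<inter> N y')) \<le> card (N x)"
      using f by (intro card_mono) auto
    ultimately show ?thesis using c1 c2 by linarith
  qed
  have claim2: "\<exists>y y'. (x,y) \<in> A \<and> (x,y') \<in> A \<and> (y,y') \<in> G" if xU: "x \<in> U" for x
  proof (rule ccontr)
    assume H: "\<not> ?thesis"
    obtain q where xq: "(x,q) \<in> G" using nb[OF xU] by blast
    then obtain w where xw: "(x,w) \<in> A" and wq: "(w,q) \<in> A" using GAA by blast
    have "4 \<le> card (N w \<inter> N q)" using cod[OF wq] unfolding N_def by simp
    then have "N w \<inter> N q \<noteq> {}" by (metis card.empty not_numeral_le_zero)
    then obtain z where wz: "(w,z) \<in> G" and qz: "(q,z) \<in> G" unfolding N_def by blast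
    have zU: "z \<in> U" using GU wz by blast
    have "z \<noteq> x" using wz xw disj symG by blast
    then have "(x,z) \<in> A \<or> (x,z) \<in> G" using tot xU zU by blast
    moreover have "(x,z) \<notin> G" using tri xq qz symG by blast
    ultimately have "(x,z) \<in> A" by blast
    then show False using H xw wz by blast
  qed
  have "U \<noteq> {}" using cardU by auto
  then obtain x0 where x0: "x0 \<in> U" by blast
  obtain u0 where xu: "(x0,u0) \<in> G" using nb[OF x0] by blast
  have u0: "u0 \<in> U" using GU xu by blast
  have c1: "8 \<le> card (N x0)" using claim2[OF x0] claim1 by blast
  have c2: "8 \<le> card (N u0)" using claim2[OF u0] claim1 by blast
  have d: "N x0 \<inter> N u0 = {}" using tri symG xu unfolding N_def by blast
  have "card (N x0 \<union> N u0) = card (N x0) + card (N u0)"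
    using d fN by (intro card_Un_disjoint) auto
  moreover have "card (N x0 \<union> N u0) \<le> card U"
    using NU fin by (intro card_mono) auto
  ultimately show False using c1 c2 cardU by linarith
qed


lemma rc1: "ra_comp {Ab,Ac} {Ab,Ac} = {E,Aa}"
  by (rule set_eqI, case_tac x) (auto simp: ra_comp_def atom_comp_def)
lemma rc2: "ra_comp {Aa} {Aa} = UNIV"
  by (rule set_eqI, case_tac x) (auto simp: ra_comp_def atom_comp_def)
lemma rc3: "ra_comp {Ab} {Ab} = {E,Aa}"
  by (rule set_eqI, case_tac x) (auto simp: ra_comp_def atom_comp_def)
lemma rc4: "ra_comp {Ac} {Ac} = {E,Aa}"
  by (rule set_eqI, case_tac x) (auto simp: ra_comp_def atom_comp_def)
lemma rc5: "ra_comp {Ab} {Ac} = {Aa}"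
  by (rule set_eqI, case_tac x) (auto simp: ra_comp_def atom_comp_def)
lemma rc6: "ra_comp {Ac} {Ab} = {Aa}"
  by (rule set_eqI, case_tac x) (auto simp: ra_comp_def atom_comp_def)
lemma univ_atoms: "(UNIV :: atom set) = {E} \<union> {Aa} \<union> {Ab,Ac}"
  by (rule set_eqI, case_tac x) auto

theorem mainTheorem5:
  fixes U :: "'u set"
  assumes "finite U" and "card U = 11"
  shows "\<not> has_representation_over U"
proof
  assume "has_representation_over U"
  then obtain h where rep: "representation U h" unfolding has_representation_over_def by blast
  note R = rep[unfolded representation_def]
  have hU: "h X \<subseteq> U \<times> U" for X using R by (elim conjE) (rule spec)
  have hun: "h (X \<union> Y) = h X \<union> h Y" for X Y using R by (elim conjE) metis
  have hco: "h (- X) = U \<times> U - h X" for X using R by (elim conjE) (rule spec)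
  have hone: "h {E} = Id_on U" using R unfolding ra_one_def by (elim conjE)
  have hcv: "h X = (h X)\<inverse>" for X using R unfolding ra_conv_def by (elim conjE) (rule spec)
  have hcm: "h (ra_comp X Y) = h X O h Y" for X Y using R by (elim conjE) metis
  have hUNIV: "h UNIV = U \<times> U"
  proof -
    have "h UNIV = h ({} \<union> - {})" by simp
    also have "\<dots> = h {} \<union> (U \<times> U - h {})" by (simp only: hun hco)
    also have "\<dots> = U \<times> U" using hU[of "{}"] by blast
    finally show ?thesis .
  qed
  have hemp: "h {} = {}" using hco[of UNIV] hUNIV by simp
  have hint: "h (X \<inter> Y) = h X \<inter> h Y" for X Y
  proof -
    have "h (X \<inter> Y) = h (- (- X \<union> - Y))" by simp
    also have "\<dots> = U \<times> U - ((U \<times> U - h X) \<union> (U \<times> U - h Y))" by (simp only: hun hco)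
    also have "\<dots> = h X \<inter> h Y" using hU[of X] hU[of Y] by blast
    finally show ?thesis .
  qed
  have hdisj: "h X \<inter> h Y = {}" if "X \<inter> Y = {}" for X Y using hint[of X Y] hemp that by simp
  have hmono: "h X \<subseteq> h Y" if "X \<subseteq> Y" for X Y
  proof -
    have "h Y = h (X \<union> Y)" using that by (simp add: Un_absorb1)
    then show ?thesis using hun[of X Y] by blast
  qed
  define A where "A = h {Aa}"
  define G where "G = h {Ab,Ac}"
  define B where "B = h {Ab}"
  define C where "C = h {Ac}"
  have GBC: "G = B \<union> C" 
  proof -
    have "{Ab,Ac} = {Ab} \<union> {Ac}" by auto
    then show ?thesis unfolding G_def B_def C_def using hun[of "{Ab}" "{Ac}"] by simp
  qed
  have BC: "B \<inter> C = {}" unfolding B_def C_def by (rule hdisj) auto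
  have AG: "A \<inter> G = {}" unfolding A_def G_def by (rule hdisj) auto
  have EG: "h {E} \<inter> G = {}" unfolding G_def by (rule hdisj) auto
  have EAG: "h {E,Aa} \<inter> G = {}" unfolding G_def by (rule hdisj) auto
  have cover: "U \<times> U = h {E} \<union> A \<union> G"
  proof -
    have "h UNIV = h ({E} \<union> {Aa} \<union> {Ab,Ac})" by (simp only: univ_atoms)
    then show ?thesis unfolding A_def G_def hUNIV by (simp only: hun)
  qed
  have AhEA: "A \<subseteq> h {E,Aa}" unfolding A_def by (rule hmono) auto
  have GU: "G \<subseteq> U \<times> U" unfolding G_def by (rule hU)
  have symG: "(y,x) \<in> G" if "(x,y) \<in> G" for x y using that hcv[of "{Ab,Ac}"] unfolding G_def by blast
  have disj: "(x,y) \<notin> G" if "(x,y) \<in> A" for x y using that AG by blast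
  have tot: "(x,y) \<in> A \<or> (x,y) \<in> G" if "x \<in> U" "y \<in> U" "x \<noteq> y" for x y
  proof -
    have "(x,y) \<in> U \<times> U" using that by blast
    moreover have "(x,y) \<notin> h {E}" using that hone by auto
    ultimately show ?thesis using cover by blast
  qed
  have tri: "(x,z) \<notin> G" if "(x,y) \<in> G" "(y,z) \<in> G" for x y z
  proof -
    have "(x,z) \<in> G O G" using that by blast
    then have "(x,z) \<in> h {E,Aa}" using hcm[of "{Ab,Ac}" "{Ab,Ac}"] rc1 unfolding G_def by simp
    then show ?thesis using EAG by blast
  qed
  have GAA: "G \<subseteq> A O A" using GU hcm[of "{Aa}" "{Aa}"] rc2 hUNIV unfolding A_def by simp
  have BB: "A \<subseteq> B O B" using AhEA hcm[of "{Ab}" "{Ab}"] rc3 unfolding B_def by simp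
  have CC: "A \<subseteq> C O C" using AhEA hcm[of "{Ac}" "{Ac}"] rc4 unfolding C_def by simp
  have BC': "A \<subseteq> B O C" using hcm[of "{Ab}" "{Ac}"] rc5 unfolding A_def B_def C_def by simp
  have CB': "A \<subseteq> C O B" using hcm[of "{Ac}" "{Ab}"] rc6 unfolding A_def B_def C_def by simp
  have cod: "4 \<le> card ({z. (x,z) \<in> G} \<inter> {z. (y,z) \<in> G})" if xy: "(x,y) \<in> A" for x y
  proof -
    obtain z1 where z1: "(x,z1) \<in> B" "(z1,y) \<in> B" using BB xy by blast
    obtain z2 where z2: "(x,z2) \<in> C" "(z2,y) \<in> C" using CC xy by blast
    obtain z3 where z3: "(x,z3) \<in> B" "(z3,y) \<in> C" using BC' xy by blast
    obtain z4 where z4: "(x,z4) \<in> C" "(z4,y) \<in> B" using CB' xy by blast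
    have d12: "z1 \<noteq> z2" using z1(1) z2(1) BC by blast
    have d13: "z1 \<noteq> z3" using z1(2) z3(2) BC by blast
    have d14: "z1 \<noteq> z4" using z1(1) z4(1) BC by blast
    have d23: "z2 \<noteq> z3" using z2(1) z3(1) BC by blast
    have d24: "z2 \<noteq> z4" using z2(2) z4(2) BC by blast
    have d34: "z3 \<noteq> z4" using z3(1) z4(1) BC by blast
    note dist = d12 d13 d14 d23 d24 d34
    have inG: "(x,z) \<in> G \<and> (y,z) \<in> G" if "(x,z) \<in> B \<union> C" "(z,y) \<in> B \<union> C" for z
      using that symG unfolding GBC[symmetric] by blast
    have sub: "{z1,z2,z3,z4} \<subseteq> {z. (x,z) \<in> G} \<inter> {z. (y,z) \<in> G}"
    proof -
      have m1: "(x,z1) \<in> G \<and> (y,z1) \<in> G" by (rule inG) (use z1 in blast)+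
      have m2: "(x,z2) \<in> G \<and> (y,z2) \<in> G" by (rule inG) (use z2 in blast)+
      have m3: "(x,z3) \<in> G \<and> (y,z3) \<in> G" by (rule inG) (use z3 in blast)+
      have m4: "(x,z4) \<in> G \<and> (y,z4) \<in> G" by (rule inG) (use z4 in blast)+
      show ?thesis using m1 m2 m3 m4 by blast
    qed
    have sU: "{z. (x,z) \<in> G} \<inter> {z. (y,z) \<in> G} \<subseteq> U" using GU by blast
    have fin: "finite ({z. (x,z) \<in> G} \<inter> {z. (y,z) \<in> G})"
      using sU assms(1) by (rule finite_subset)
    have "card {z1,z2,z3,z4} = 4" using dist by simp
    then show ?thesis using card_mono[OF fin sub] by simp
  qed
  have nb: "\<exists>q. (x,q) \<in> G" if "x \<in> U" for x
  proof -
    have "(x,x) \<in> h {E}" using hone that by blast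
    moreover have "h {E} \<subseteq> B O B" using hcm[of "{Ab}" "{Ab}"] rc3 hmono[of "{E}" "{E,Aa}"] unfolding B_def by auto
    ultimately show ?thesis using GBC by blast
  qed
  show False
    by (rule comb_core[OF assms GU symG disj tot tri GAA cod nb])
qed

end
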